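(* Let $\delta\ge 2$, $n\ge 8\delta-7$ and $s$ be integers with $\delta+1\le s\le n/2$. Then $$\rho_{\mathcal D}\big(K_s\vee(K_{n-2s+1}\cup(s-1)K_1)\big)\ >\ \rho_{\mathcal D}\big(K_\delta\vee(K_{n-2\delta+1}\cup(\delta-1)K_1)\big).$$
   Context: For a connected graph $G$, $\mathcal D(G)$ is its distance matrix (entry $(i,j)$ is the distance between the $i$-th and $j$-th vertices) and $\rho_{\mathcal D}(G)$ its largest eigenvalue. $K_m$ is the complete graph on $m$ vertices, $tK_1$ the edgeless graph on $t$ vertices, $\cup$ disjoint union, and $\vee$ the join. *)

theory Defs
  imports "Jordan_Normal_Form.Char_Poly"
begin

text \<open>A finite simple graph on the vertex set {0..<n}, given by its order and a
  (symmetric, irreflexive) adjacency relation.\<close>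
type_synonym graph = "nat \<times> (nat \<Rightarrow> nat \<Rightarrow> bool)"

definition gorder :: "graph \<Rightarrow> nat" where "gorder G = fst G"
definition gadj :: "graph \<Rightarrow> nat \<Rightarrow> nat \<Rightarrow> bool" where "gadj G = snd G"

definition complete_graph :: "nat \<Rightarrow> graph" where
  "complete_graph m = (m, \<lambda>i j. i \<noteq> j)"

definition edgeless_graph :: "nat \<Rightarrow> graph" where
  "edgeless_graph t = (t, \<lambda>i j. False)"

definition graph_union :: "graph \<Rightarrow> graph \<Rightarrow> graph" where
  "graph_union G H = (gorder G + gorder H,
     \<lambda>i j. if i < gorder G \<and> j < gorder G then gadj G i j
           else if gorder G \<le> i \<and> gorder G \<le> j then gadj H (i - gorder G) (j - gorder G)
           else False)"

definition graph_join :: "graph \<Rightarrow> graph \<Rightarrow> graph" where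
  "graph_join G H = (gorder G + gorder H,
     \<lambda>i j. if i < gorder G \<and> j < gorder G then gadj G i j
           else if gorder G \<le> i \<and> gorder G \<le> j then gadj H (i - gorder G) (j - gorder G)
           else True)"

fun walk_len :: "graph \<Rightarrow> nat \<Rightarrow> nat \<Rightarrow> nat \<Rightarrow> bool" where
  "walk_len G 0 i j = (i = j)"
| "walk_len G (Suc k) i j = (\<exists>m < gorder G. gadj G i m \<and> walk_len G k m j)"

definition graph_dist :: "graph \<Rightarrow> nat \<Rightarrow> nat \<Rightarrow> nat" where
  "graph_dist G i j = (LEAST k. walk_len G k i j)"

definition distance_matrix :: "graph \<Rightarrow> real mat" where
  "distance_matrix G = mat (gorder G) (gorder G) (\<lambda>(i, j). real (graph_dist G i j))"

definition distance_spectral_radius :: "graph \<Rightarrow> real" where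
  "distance_spectral_radius G = Max {k. eigenvalue (distance_matrix G) k}"

definition connected_graph :: "graph \<Rightarrow> bool" where
  "connected_graph G = (\<forall>i < gorder G. \<forall>j < gorder G. \<exists>k. walk_len G k i j)"

end

theory Submission
  imports Defs
begin


definition GG :: "nat \<Rightarrow> nat \<Rightarrow> graph" where
  "GG s n = graph_join (complete_graph s) (graph_union (complete_graph (n - 2*s + 1)) (edgeless_graph (s - 1)))"

lemma gorder_GG: "1 \<le> s \<Longrightarrow> 2*s \<le> n \<Longrightarrow> gorder (GG s n) = n"
  by (simp add: GG_def graph_join_def graph_union_def complete_graph_def edgeless_graph_def gorder_def)

lemma gadj_GG: "gadj (GG s n) i j = (if i < s \<and> j < s then i \<noteq> j
   else if s \<le> i \<and> s \<le> j then (i < s + (n - 2*s+1) \<and> j < s + (n-2*s+1) \<and> i \<noteq> j) else True)"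
  by (auto simp add: GG_def graph_join_def graph_union_def complete_graph_def edgeless_graph_def gorder_def gadj_def)

lemma walk1: "walk_len G (Suc 0) i j = (j < gorder G \<and> gadj G i j)"
  by auto

lemma dist_GG:
  assumes "1 \<le> s" "2*s \<le> n" "i < n" "j < n"
  shows "graph_dist (GG s n) i j = (if i = j then 0 else if gadj (GG s n) i j then 1 else 2)"
proof -
  have go: "gorder (GG s n) = n" using assms gorder_GG by auto
  show ?thesis
  proof (cases "i = j")
    case True then show ?thesis unfolding graph_dist_def by simp
  next
    case ne: False
    show ?thesis
    proof (cases "gadj (GG s n) i j")
      case True
      have "walk_len (GG s n) 1 i j" using True go assms by simp
      moreover have "\<not> walk_len (GG s n) 0 i j" using ne by simp
      ultimately have "(LEAST k. walk_len (GG s n) k i j) = 1"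
        apply (intro Least_equality, simp)
        subgoal for y using ne by (cases y) auto
        done
      then show ?thesis using ne True unfolding graph_dist_def by simp
    next
      case False
      have ii: "s \<le> i" "s \<le> j" using False ne by (auto simp: gadj_GG split: if_splits)
      have a1: "gadj (GG s n) i 0" "gadj (GG s n) 0 j" using ii assms by (auto simp: gadj_GG)
      have "walk_len (GG s n) 2 i j"
        using a1 go assms by (auto simp: numeral_2_eq_2 intro!: exI[of _ 0])
      moreover have "\<not> walk_len (GG s n) 0 i j" using ne by simp
      moreover have "\<not> walk_len (GG s n) 1 i j" using False by simp
      ultimately have "(LEAST k. walk_len (GG s n) k i j) = 2"
        apply (intro Least_equality, simp)
        by (metis One_nat_def less_2_cases not_le)
      then show ?thesis using ne False unfolding graph_dist_def by simp
    qed
  qed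
qed

definition off :: "nat \<Rightarrow> nat \<Rightarrow> nat \<Rightarrow> nat \<Rightarrow> real" where
  "off s n i j = (if s \<le> i \<and> s \<le> j \<and> (s + (n - 2*s+1) \<le> i \<or> s + (n - 2*s+1) \<le> j) then 2 else 1)"

lemma D_GG:
  assumes "1 \<le> s" "2*s \<le> n" "i < n" "j < n"
  shows "distance_matrix (GG s n) $$ (i,j) = (if i = j then 0 else off s n i j)"
  using assms by (simp add: distance_matrix_def gorder_GG dist_GG gadj_GG off_def)

lemma D_carrier: "1 \<le> s \<Longrightarrow> 2*s \<le> n \<Longrightarrow> distance_matrix (GG s n) \<in> carrier_mat n n"
  by (simp add: distance_matrix_def gorder_GG)

lemma sum_if_eq: "finite A \<Longrightarrow> i \<in> A \<Longrightarrow> (\<Sum>j\<in>A. (if i = j then 0 else f j) * g j) = (\<Sum>j\<in>A. f j * g j) - f i * (g i::real)"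
proof -
  assume a: "finite A" "i \<in> A"
  have "(\<Sum>j\<in>A. (if i = j then 0 else f j) * g j) = (\<Sum>j\<in>A. f j * g j - (if j = i then f i * g i else 0))"
    by (rule sum.cong) auto
  also have "\<dots> = (\<Sum>j\<in>A. f j * g j) - f i * g i" using a by (simp add: sum_subtractf)
  finally show ?thesis .
qed

lemma mult_GG:
  assumes "1 \<le> s" "2*s \<le> n" "i < n" "v \<in> carrier_vec n"
  shows "(distance_matrix (GG s n) *\<^sub>v v) $ i = (\<Sum>j<n. off s n i j * v $ j) - off s n i i * v $ i"
proof -
  have "(distance_matrix (GG s n) *\<^sub>v v) $ i = (\<Sum>j\<in>{0..<n}. distance_matrix (GG s n) $$ (i,j) * v $ j)"
    using assms D_carrier[OF assms(1,2)] by (simp add: scalar_prod_def row_def)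
  also have "\<dots> = (\<Sum>j\<in>{0..<n}. (if i = j then 0 else off s n i j) * v $ j)"
    using assms by (intro sum.cong) (auto simp: D_GG)
  also have "\<dots> = (\<Sum>j\<in>{0..<n}. off s n i j * v $ j) - off s n i i * v $ i"
    using assms by (intro sum_if_eq) auto
  finally show ?thesis by (simp add: atLeast0LessThan)
qed

lemma sum3_gen:
  assumes n: "s + t + u = (n::nat)"
  shows "(\<Sum>j<n. (if j < s then a else if j < s + t then b else c) *
                   (if j < s then A else if j < s + t then B else C)) =
         real s * a * A + real t * b * B + real u * c * (C::real)"
proof -
  let ?h = "\<lambda>j. (if j < s then a else if j < s + t then b else c) *
                   (if j < s then A else if j < s + t then B else C)"
  have e: "{..<n} = ({0..<s} \<union> {s..<s+t}) \<union> {s+t..<n}" using n by auto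
  have "(\<Sum>j<n. ?h j) = (\<Sum>j\<in>{0..<s} \<union> {s..<s+t}. ?h j) + (\<Sum>j\<in>{s+t..<n}. ?h j)"
    unfolding e by (rule sum.union_disjoint) auto
  also have "(\<Sum>j\<in>{0..<s} \<union> {s..<s+t}. ?h j) = (\<Sum>j\<in>{0..<s}. ?h j) + (\<Sum>j\<in>{s..<s+t}. ?h j)"
    by (rule sum.union_disjoint) auto
  also have "(\<Sum>j\<in>{0..<s}. ?h j) = (\<Sum>j\<in>{0..<s}. a * A)" by (intro sum.cong) auto
  also have "(\<Sum>j\<in>{s..<s+t}. ?h j) = (\<Sum>j\<in>{s..<s+t}. b * B)" by (intro sum.cong) auto
  also have "(\<Sum>j\<in>{s+t..<n}. ?h j) = (\<Sum>j\<in>{s+t..<n}. c * C)" by (intro sum.cong) auto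
  finally show ?thesis using n by simp
qed

lemma sum3:
  assumes "1 \<le> s" "2*s \<le> n"
  shows "(\<Sum>j<n. (if j < s then a else if j < s + (n-2*s+1) then b else c) *
                   (if j < s then A else if j < s + (n-2*s+1) then B else C)) =
         real s * a * A + real (n-2*s+1) * b * B + real (s - 1) * c * (C::real)"
  by (rule sum3_gen) (use assms in auto)

lemma off_X: "i < s \<Longrightarrow> off s n i j = 1" by (simp add: off_def)
lemma off_Y: "s \<le> i \<Longrightarrow> i < s + (n-2*s+1) \<Longrightarrow>
   off s n i j = (if j < s then 1 else if j < s + (n-2*s+1) then 1 else 2)" by (simp add: off_def)
lemma off_Z: "s + (n-2*s+1) \<le> i \<Longrightarrow>
   off s n i j = (if j < s then 1 else if j < s + (n-2*s+1) then 2 else 2)" by (simp add: off_def)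

definition Fc :: "real \<Rightarrow> real \<Rightarrow> real \<Rightarrow> real" where
  "Fc s n x = x^3 - (n+s-5)*x^2 + (-2*n*s - n + 5*s^2 - 8*s + 8)*x + (n*s^2 - 3*n*s - 2*s^3 + 8*s^2 - 8*s + 4)"

lemma ids:
  fixes s n x t :: real
  assumes t: "t = n - 2*s + 1"
  defines "K \<equiv> (x+3-s)*(x+1) - t*(s-1)"
  defines "A \<equiv> K" and "B \<equiv> K + (s-1)*(x+1+t)" and "C \<equiv> (x+1)*(x+1+t)"
  shows "s*A + t*B + (s-1)*C - A = x * A - Fc s n x"
    and "s*A + t*B + 2*(s-1)*C - B = x * B - Fc s n x"
    and "s*A + 2*t*B + 2*(s-1)*C - 2*C = x * C - Fc s n x"
  unfolding A_def B_def C_def K_def t Fc_def by (simp_all add: power2_eq_square power3_eq_cube algebra_simps)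

lemma eig_of_root:
  assumes s: "2 \<le> s" "2*s \<le> n" and F: "Fc (real s) (real n) x = 0" and x: "x > -1"
  shows "eigenvalue (distance_matrix (GG s n)) x"
proof -
  have s1: "1 \<le> s" using s by auto
  define t where "t = real n - 2 * real s + 1"
  have tt: "real (n - 2*s + 1) = t" using s by (simp add: t_def of_nat_diff)
  have tpos: "t \<ge> 1" using s by (simp add: t_def)
  define K where "K = (x+3-real s)*(x+1) - t*(real s-1)"
  define A where "A = K"
  define B where "B = K + (real s-1)*(x+1+t)"
  define C where "C = (x+1)*(x+1+t)"
  note I = ids[OF t_def, of x, folded K_def, folded A_def B_def C_def, unfolded F]
  have Cpos: "C > 0" unfolding C_def using x tpos by auto
  define v where "v = vec n (\<lambda>j. if j < s then A else if j < s + (n-2*s+1) then B else C)"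
  have vc: "v \<in> carrier_vec n" by (simp add: v_def)
  have ln: "s + (n-2*s+1) \<le> n - 1" "n - 1 < n" using s by auto
  have v0: "v \<noteq> 0\<^sub>v n"
  proof
    assume "v = 0\<^sub>v n"
    then have "v $ (n-1) = 0" using ln by simp
    moreover have "v $ (n-1) = C" using ln by (simp add: v_def)
    ultimately show False using Cpos by simp
  qed
  have ev: "distance_matrix (GG s n) *\<^sub>v v = x \<cdot>\<^sub>v v"
  proof (rule eq_vecI)
    show "dim_vec (distance_matrix (GG s n) *\<^sub>v v) = dim_vec (x \<cdot>\<^sub>v v)"
      using D_carrier[OF s1 s(2)] vc by simp
    fix i assume "i < dim_vec (x \<cdot>\<^sub>v v)"
    then have i: "i < n" using vc by simp
    have vv: "\<And>j. j < n \<Longrightarrow> v $ j = (if j < s then A else if j < s + (n-2*s+1) then B else C)"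
      by (simp add: v_def)
    have M: "(distance_matrix (GG s n) *\<^sub>v v) $ i = (\<Sum>j<n. off s n i j * v $ j) - off s n i i * v $ i"
      by (rule mult_GG[OF s1 s(2) i vc])
    have sumeq: "\<And>f. (\<Sum>j<n. f j * v $ j) = (\<Sum>j<n. f j * (if j < s then A else if j < s + (n-2*s+1) then B else C))"
      by (intro sum.cong) (auto simp: vv)
    consider "i < s" | "s \<le> i" "i < s + (n-2*s+1)" | "s + (n-2*s+1) \<le> i" by linarith
    then show "(distance_matrix (GG s n) *\<^sub>v v) $ i = (x \<cdot>\<^sub>v v) $ i"
    proof cases
      case 1
      have "(\<Sum>j<n. off s n i j * v $ j) = (\<Sum>j<n. (if j < s then 1 else if j < s + (n-2*s+1) then 1 else 1) * (if j < s then A else if j < s + (n-2*s+1) then B else C))"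
        unfolding sumeq using 1 by (intro sum.cong) (auto simp: off_X)
      also have "\<dots> = real s * A + t * B + (real s - 1) * C" unfolding sum3[OF s1 s(2)] tt using s1 by (simp add: of_nat_diff)
      finally show ?thesis using M 1 i I(1) by (simp add: vv off_X v_def)
    next
      case 2
      have "(\<Sum>j<n. off s n i j * v $ j) = (\<Sum>j<n. (if j < s then 1 else if j < s + (n-2*s+1) then 1 else 2) * (if j < s then A else if j < s + (n-2*s+1) then B else C))"
        unfolding sumeq using 2 by (intro sum.cong) (auto simp: off_Y)
      also have "\<dots> = real s * A + t * B + 2 * (real s - 1) * C" unfolding sum3[OF s1 s(2)] tt using s1 by (simp add: of_nat_diff)
      finally show ?thesis using M 2 i I(2) by (simp add: vv off_Y v_def)
    next
      case 3
      have "(\<Sum>j<n. off s n i j * v $ j) = (\<Sum>j<n. (if j < s then 1 else if j < s + (n-2*s+1) then 2 else 2) * (if j < s then A else if j < s + (n-2*s+1) then B else C))"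
        unfolding sumeq using 3 by (intro sum.cong) (auto simp: off_Z)
      also have "\<dots> = real s * A + 2 * t * B + 2 * (real s - 1) * C" unfolding sum3[OF s1 s(2)] tt using s1 by (simp add: of_nat_diff)
      finally show ?thesis using M 3 i I(3) by (simp add: vv off_Z v_def)
    qed
  qed
  show ?thesis unfolding eigenvalue_def eigenvector_def
    using vc v0 ev D_carrier[OF s1 s(2)] by auto
qed

lemma det_zero:
  fixes s n t x A B C :: real
  assumes t: "t = n - 2*s + 1"
    and e1: "(x+1)*A = s*A + t*B + (s-1)*C"
    and e2: "(x+1)*B = s*A + t*B + 2*(s-1)*C"
    and e3: "(x+2)*C = s*A + 2*t*B + 2*(s-1)*C"
  shows "Fc s n x * A = 0" "Fc s n x * B = 0" "Fc s n x * C = 0"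
proof -
  define E1 where "E1 = (x+1)*A - (s*A + t*B + (s-1)*C)"
  define E2 where "E2 = (x+1)*B - (s*A + t*B + 2*(s-1)*C)"
  define E3 where "E3 = (x+2)*C - (s*A + 2*t*B + 2*(s-1)*C)"
  have z: "E1 = 0" "E2 = 0" "E3 = 0" using e1 e2 e3 by (simp_all add: E1_def E2_def E3_def)
  have "Fc s n x * A = (-2*s*t - 2*s*x - 2*s - t*x + x^2 + 5*x + 4) * E1 + (t*x + 2*t) * E2 + (s*t + s*x + s - t - x - 1) * E3"
    unfolding E1_def E2_def E3_def Fc_def t by (simp add: power2_eq_square power3_eq_cube algebra_simps)
  then show "Fc s n x * A = 0" using z by simp
  have "Fc s n x * B = (s*x + 2*s) * E1 + (s^2 - 3*s*x - 5*s + x^2 + 5*x + 4) * E2 + (- (s^2) + 2*s*x + 3*s - 2*x - 2) * E3"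
    unfolding E1_def E2_def E3_def Fc_def t by (simp add: power2_eq_square power3_eq_cube algebra_simps)
  then show "Fc s n x * B = 0" using z by simp
  have "Fc s n x * C = (s*t + s*x + s) * E1 + (-s*t + 2*t*x + 2*t) * E2 + (-s*x - s - t*x - t + x^2 + 2*x + 1) * E3"
    unfolding E1_def E2_def E3_def Fc_def t by (simp add: power2_eq_square power3_eq_cube algebra_simps)
  then show "Fc s n x * C = 0" using z by simp
qed

lemma root_of_eig:
  assumes s: "2 \<le> s" "2*s \<le> n" and e: "eigenvalue (distance_matrix (GG s n)) x"
  shows "x = -1 \<or> x = -2 \<or> Fc (real s) (real n) x = 0"
proof (rule ccontr)
  assume nx: "\<not> (x = -1 \<or> x = -2 \<or> Fc (real s) (real n) x = 0)"
  have x1: "x + 1 \<noteq> 0" and x2: "x + 2 \<noteq> 0" and F0: "Fc (real s) (real n) x \<noteq> 0" using nx by auto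
  have s1: "1 \<le> s" using s by auto
  let ?T = "s + (n-2*s+1)"
  define t where "t = real n - 2 * real s + 1"
  have tt: "real (n - 2*s + 1) = t" using s by (simp add: t_def of_nat_diff)
  have ss: "real (s - 1) = real s - 1" using s1 by (simp add: of_nat_diff)
  obtain v where vc: "v \<in> carrier_vec n" and v0: "v \<noteq> 0\<^sub>v n" and ev: "distance_matrix (GG s n) *\<^sub>v v = x \<cdot>\<^sub>v v"
    using e D_carrier[OF s1 s(2)] unfolding eigenvalue_def eigenvector_def by auto
  have eq: "(\<Sum>j<n. off s n i j * v $ j) - off s n i i * v $ i = x * v $ i" if i: "i < n" for i
  proof -
    have "(distance_matrix (GG s n) *\<^sub>v v) $ i = (x \<cdot>\<^sub>v v) $ i" using ev by simp
    then show ?thesis using mult_GG[OF s1 s(2) i vc] vc i by simp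
  qed
  define R0 where "R0 = (\<Sum>j<n. (if j < s then 1 else if j < ?T then 1 else 1) * v $ j)"
  define R1 where "R1 = (\<Sum>j<n. (if j < s then 1 else if j < ?T then 1 else 2) * v $ j)"
  define R2 where "R2 = (\<Sum>j<n. (if j < s then 1 else if j < ?T then 2 else 2) * v $ j)"
  define A where "A = R0 / (x+1)"
  define B where "B = R1 / (x+1)"
  define C where "C = R2 / (x+2)"
  have vv: "v $ j = (if j < s then A else if j < ?T then B else C)" if j: "j < n" for j
  proof -
    consider "j < s" | "s \<le> j" "j < ?T" | "?T \<le> j" by linarith
    then show ?thesis
    proof cases
      case 1
      have "(\<Sum>i<n. off s n j i * v $ i) = R0" unfolding R0_def using 1 by (intro sum.cong) (auto simp: off_X)
      then have "R0 - v $ j = x * v $ j" using eq[OF j] 1 by (simp add: off_X)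
      then have "v $ j = R0 / (x+1)" using x1 by (simp add: field_simps)
      then show ?thesis using 1 by (simp add: A_def)
    next
      case 2
      have "(\<Sum>i<n. off s n j i * v $ i) = R1" unfolding R1_def using 2 by (intro sum.cong) (auto simp: off_Y)
      then have "R1 - v $ j = x * v $ j" using eq[OF j] 2 by (simp add: off_Y)
      then have "v $ j = R1 / (x+1)" using x1 by (simp add: field_simps)
      then show ?thesis using 2 by (simp add: B_def)
    next
      case 3
      have "(\<Sum>i<n. off s n j i * v $ i) = R2" unfolding R2_def using 3 by (intro sum.cong) (auto simp: off_Z)
      then have "R2 - 2 * v $ j = x * v $ j" using eq[OF j] 3 by (simp add: off_Z)
      then have "v $ j = R2 / (x+2)" using x2 by (simp add: field_simps)
      then show ?thesis using 3 by (simp add: C_def)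
    qed
  qed
  have sumeq: "\<And>f. (\<Sum>j<n. f j * v $ j) = (\<Sum>j<n. f j * (if j < s then A else if j < ?T then B else C))"
    by (intro sum.cong) (auto simp: vv)
  have r0: "R0 = real s * A + t * B + (real s - 1) * C"
    unfolding R0_def sumeq sum3[OF s1 s(2)] tt ss by simp
  have r1: "R1 = real s * A + t * B + 2 * (real s - 1) * C"
    unfolding R1_def sumeq sum3[OF s1 s(2)] tt ss by simp
  have r2: "R2 = real s * A + 2 * t * B + 2 * (real s - 1) * C"
    unfolding R2_def sumeq sum3[OF s1 s(2)] tt ss by simp
  have e1: "(x+1)*A = real s * A + t * B + (real s - 1) * C" using r0 x1 by (simp add: A_def)
  have e2: "(x+1)*B = real s * A + t * B + 2 * (real s - 1) * C" using r1 x1 by (simp add: B_def)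
  have e3: "(x+2)*C = real s * A + 2 * t * B + 2 * (real s - 1) * C" using r2 x2 by (simp add: C_def)
  note dz = det_zero[OF t_def e1 e2 e3]
  have "A = 0" "B = 0" "C = 0" using dz F0 by auto
  then have "v = 0\<^sub>v n" using vc vv by (intro eq_vecI) auto
  then show False using v0 by simp
qed



definition gq :: "real \<Rightarrow> real \<Rightarrow> real \<Rightarrow> real \<Rightarrow> real" where
  "gq d s n x = x^2 + (2*n - 5*(s+d) + 8)*x - n*(s+d) + 3*n + 2*(d^2+d*s+s^2) - 8*(s+d) + 8"

lemma Fc_diff: "Fc d n x - Fc s n x = (s - d) * gq d s n x"
  unfolding Fc_def gq_def by (simp add: power2_eq_square power3_eq_cube algebra_simps)

lemma gq_L:
  fixes d s n :: real
  assumes "d \<ge> 2" "8*d \<le> n + 7" "2*s \<le> n" "s > 0"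
  shows "gq d s n (n + s/4) > 0"
proof -
  define a where "a = n - 2*s"
  have a: "a \<ge> 0" using assms by (simp add: a_def)
  have n: "n = 2*s + a" by (simp add: a_def)
  define p1 where "p1 = s*(2*s+a+7) - s*(8*d)"
  define p2 where "p2 = a*(2*s+a+7) - a*(8*d)"
  define p3 where "p3 = (d-2)^2"
  define p4 where "p4 = a^2"
  define p5 where "p5 = s*a"
  have h1: "p1 \<ge> 0" unfolding p1_def using assms n by (simp add: mult_left_mono)
  have h2: "p2 \<ge> 0" unfolding p2_def using assms n a by (simp add: mult_left_mono)
  have h3: "p3 \<ge> 0" "p4 \<ge> 0" "p5 \<ge> 0" unfolding p3_def p4_def p5_def using a assms by auto
  have "16 * gq d s n (n + s/4) = (45/2)*p1 + 12*p2 + 32*p3 + 36*p4 + 92*a + (131/2)*p5 + (197/2)*s"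
    unfolding gq_def n p1_def p2_def p3_def p4_def p5_def by (simp add: power2_eq_square field_simps)
  moreover have "(45/2)*p1 + 12*p2 + 32*p3 + 36*p4 + 92*a + (131/2)*p5 + (197/2)*s > 0"
    using h1 h2 h3 a assms(4) by linarith
  ultimately show ?thesis by simp
qed

lemma gq_pos:
  fixes d s n x :: real
  assumes "d \<ge> 2" "8*d \<le> n + 7" "2*s \<le> n" "s > 0" "x \<ge> n + s/4"
  shows "gq d s n x > 0"
proof -
  let ?L = "n + s/4"
  have "gq d s n x = gq d s n ?L + (x - ?L) * (x + ?L + (2*n - 5*(s+d) + 8))"
    unfolding gq_def by (simp add: power2_eq_square field_simps)
  moreover have "(x - ?L) * (x + ?L + (2*n - 5*(s+d) + 8)) \<ge> 0"
    using assms by (intro mult_nonneg_nonneg) auto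
  ultimately show ?thesis using gq_L[OF assms(1-4)] by linarith
qed

lemma F_nm1:
  fixes s n :: real
  assumes "s \<ge> 2" "2*s \<le> n"
  shows "Fc s n (n - 1) < 0"
proof -
  define a where "a = n - 2*s"
  define b where "b = s - 2"
  have ab: "a \<ge> 0" "b \<ge> 0" using assms by (auto simp: a_def b_def)
  have n: "n = 2*(2+b) + a" and s: "s = 2 + b" by (auto simp: a_def b_def)
  define p1 where "p1 = a^2*b" define p2 where "p2 = a^2" define p3 where "p3 = a*b^2"
  define p4 where "p4 = a*b" define p5 where "p5 = b^3" define p6 where "p6 = b^2"
  have h: "p1 \<ge> 0" "p2 \<ge> 0" "p3 \<ge> 0" "p4 \<ge> 0" "p5 \<ge> 0" "p6 \<ge> 0"
    unfolding p1_def p2_def p3_def p4_def p5_def p6_def using ab by auto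
  have "- Fc s n (n - 1) = 3*p1 + 3*p2 + 6*p3 + 19*p4 + 13*a + 2*p5 + 11*p6 + 19*b + 10"
    unfolding Fc_def n s p1_def p2_def p3_def p4_def p5_def p6_def
    by (simp add: power2_eq_square power3_eq_cube field_simps)
  then show ?thesis using h ab by linarith
qed

lemma F_L:
  fixes s n :: nat
  assumes "s \<ge> 3" "2*s \<le> n" "9 \<le> n"
  shows "Fc (real s) (real n) (real n + real s / 4) < 0"
proof -
  define a where "a = real n - 2*real s"
  have a: "a \<ge> 0" using assms by (simp add: a_def)
  have n: "real n = 2*real s + a" by (simp add: a_def)
  consider "s = 3" | "s = 4" | "s \<ge> 5" using assms by linarith
  then show ?thesis
  proof cases
    case 1
    define c where "c = a - 3"
    have c: "c \<ge> 0" using assms 1 by (simp add: c_def a_def)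
    have ac: "a = c + 3" by (simp add: c_def)
    have "- 64 * Fc (real s) (real n) (real n + real s / 4) = 272*c^2 + 3112*c + 4613"
      unfolding Fc_def n 1 ac by (simp add: power2_eq_square power3_eq_cube field_simps)
    moreover have "c^2 \<ge> 0" by simp
    ultimately show ?thesis using c by linarith
  next
    case 2
    define c where "c = a - 1"
    have c: "c \<ge> 0" using assms 2 by (simp add: c_def a_def)
    have ac: "a = c + 1" by (simp add: c_def)
    have "- 64 * Fc (real s) (real n) (real n + real s / 4) = 448*c^2 + 4544*c + 2688"
      unfolding Fc_def n 2 ac by (simp add: power2_eq_square power3_eq_cube field_simps)
    moreover have "c^2 \<ge> 0" by simp
    ultimately show ?thesis using c by linarith
  next
    case 3
    define b where "b = real s - 5"
    have b: "b \<ge> 0" using 3 by (simp add: b_def)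
    have s: "real s = 5 + b" by (simp add: b_def)
    define p1 where "p1 = a^2*b" define p2 where "p2 = a^2" define p3 where "p3 = a*b^2"
    define p4 where "p4 = a*b" define p5 where "p5 = b^3" define p6 where "p6 = b^2"
    have h: "p1 \<ge> 0" "p2 \<ge> 0" "p3 \<ge> 0" "p4 \<ge> 0" "p5 \<ge> 0" "p6 \<ge> 0"
      unfolding p1_def p2_def p3_def p4_def p5_def p6_def using a b by auto
    have "- 64 * Fc (real s) (real n) (real n + real s / 4) = 176*p1 + 624*p2 + 376*p3 + 3296*p4 + 6568*a + 99*p5 + 1177*p6 + 3705*b + 1219"
      unfolding Fc_def n s p1_def p2_def p3_def p4_def p5_def p6_def
      by (simp add: power2_eq_square power3_eq_cube field_simps)
    then show ?thesis using h a b by linarith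
  qed
qed

lemma cubic_large:
  fixes b c d x :: real
  assumes x: "x \<ge> 1 + \<bar>b\<bar> + \<bar>c\<bar> + \<bar>d\<bar>"
  shows "x^3 + b*x^2 + c*x + d > 0"
proof -
  have x1: "x \<ge> 1" using x by simp
  have xx: "x^2 \<ge> x" using x1 by (simp add: power2_eq_square)
  have "x^3 = x * x^2" by (simp add: power3_eq_cube power2_eq_square)
  also have "\<dots> \<ge> (1 + \<bar>b\<bar> + \<bar>c\<bar> + \<bar>d\<bar>) * x^2" using x by (intro mult_right_mono) auto
  finally have x3: "x^3 \<ge> x^2 + \<bar>b\<bar>*x^2 + \<bar>c\<bar>*x^2 + \<bar>d\<bar>*x^2" by (simp add: algebra_simps)
  have "\<bar>c\<bar>*x^2 \<ge> \<bar>c\<bar>*x" using xx by (intro mult_left_mono) auto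
  moreover have "\<bar>d\<bar>*x^2 \<ge> \<bar>d\<bar>" using xx x1 by (simp add: mult_le_cancel_left1 order_trans)
  moreover have "b*x^2 \<ge> - \<bar>b\<bar>*x^2" using mult_right_mono[of "-\<bar>b\<bar>" b "x^2"] by simp
  moreover have "c*x \<ge> - \<bar>c\<bar>*x" using x1 mult_right_mono[of "-\<bar>c\<bar>" c x] by simp
  moreover have "d \<ge> - \<bar>d\<bar>" by simp
  moreover have "x^2 > 0" using x1 by simp
  ultimately show ?thesis using x3 by linarith
qed

lemma Fc_large: "\<exists>M > y. Fc s n M > 0"
proof -
  let ?b = "- (n+s-5)" and ?c = "-2*n*s - n + 5*s^2 - 8*s + 8" and ?d = "n*s^2 - 3*n*s - 2*s^3 + 8*s^2 - 8*s + 4"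
  define M where "M = \<bar>y\<bar> + 1 + \<bar>?b\<bar> + \<bar>?c\<bar> + \<bar>?d\<bar>"
  have "M^3 + ?b*M^2 + ?c*M + ?d > 0" by (rule cubic_large) (simp add: M_def)
  then have "Fc s n M > 0" unfolding Fc_def by (simp add: algebra_simps)
  moreover have "M > y" unfolding M_def by linarith
  ultimately show ?thesis by blast
qed

lemma Fc_root_above:
  assumes "Fc s n a < 0"
  shows "\<exists>x > a. Fc s n x = 0"
proof -
  obtain M where M: "M > a" "Fc s n M > 0" using Fc_large by blast
  have "\<exists>x\<ge>a. x \<le> M \<and> Fc s n x = 0"
    by (rule IVT) (use assms M in \<open>auto simp: Fc_def intro!: continuous_intros\<close>)
  then obtain x where "x \<ge> a" "Fc s n x = 0" by blast
  moreover have "x \<noteq> a" using assms \<open>Fc s n x = 0\<close> by auto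
  ultimately show ?thesis by (intro exI[of _ x]) auto
qed

lemma Fc_roots_finite: "finite {x. Fc s n x = 0}"
proof -
  let ?p = "[: n*s^2 - 3*n*s - 2*s^3 + 8*s^2 - 8*s + 4, -2*n*s - n + 5*s^2 - 8*s + 8, - (n+s-5), 1 :]"
  have "\<And>x. poly ?p x = Fc s n x" unfolding Fc_def by (simp add: algebra_simps power2_eq_square power3_eq_cube)
  moreover have "?p \<noteq> 0" by simp
  ultimately show ?thesis using poly_roots_finite[of ?p] by simp
qed



lemma finS:
  assumes "2 \<le> s" "2*s \<le> n"
  shows "finite {k. eigenvalue (distance_matrix (GG s n)) k}"
proof -
  have "{k. eigenvalue (distance_matrix (GG s n)) k} \<subseteq> {-1, -2} \<union> {x. Fc (real s) (real n) x = 0}"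
    using root_of_eig[OF assms] by auto
  moreover have "finite ({-1, -2} \<union> {x. Fc (real s) (real n) x = 0})"
    using Fc_roots_finite by simp
  ultimately show ?thesis by (rule finite_subset)
qed

theorem mainTheorem6:
  fixes \<delta> n s :: nat
  assumes "\<delta> \<ge> 2" and "n \<ge> 8 * \<delta> - 7"
    and "\<delta> + 1 \<le> s" and "2 * s \<le> n"
  shows "distance_spectral_radius
           (graph_join (complete_graph s)
              (graph_union (complete_graph (n - 2 * s + 1)) (edgeless_graph (s - 1))))
       > distance_spectral_radius
           (graph_join (complete_graph \<delta>)
              (graph_union (complete_graph (n - 2 * \<delta> + 1)) (edgeless_graph (\<delta> - 1))))"
proof -
  have s2: "2 \<le> s" "3 \<le> s" using assms by auto
  have d2: "2 * \<delta> \<le> n" using assms by auto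
  have n9: "9 \<le> n" using assms by auto
  have d8: "8 * real \<delta> \<le> real n + 7" using assms by linarith
  define S1 where "S1 = {k. eigenvalue (distance_matrix (GG s n)) k}"
  define S2 where "S2 = {k. eigenvalue (distance_matrix (GG \<delta> n)) k}"
  have f1: "finite S1" unfolding S1_def using finS[OF s2(1) assms(4)] .
  have f2: "finite S2" unfolding S2_def using finS[OF assms(1) d2] .
  obtain r1 where r1: "r1 > real n + real s / 4" "Fc (real s) (real n) r1 = 0"
    using Fc_root_above[OF F_L[OF s2(2) assms(4) n9]] by blast
  have r1S: "r1 \<in> S1" unfolding S1_def using eig_of_root[OF s2(1) assms(4) r1(2)] r1(1) by simp
  have M1: "Max S1 \<ge> r1" using f1 r1S by simp
  have dn: "real \<delta> \<ge> 2" "2 * real \<delta> \<le> real n" using assms d2 by auto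
  obtain r2 where r2: "r2 > real n - 1" "Fc (real \<delta>) (real n) r2 = 0"
    using Fc_root_above[OF F_nm1[OF dn]] by blast
  have r2S: "r2 \<in> S2" unfolding S2_def using eig_of_root[OF assms(1) d2 r2(2)] r2(1) n9 by simp
  have ne2: "S2 \<noteq> {}" using r2S by auto
  define \<mu> where "\<mu> = Max S2"
  have muS: "\<mu> \<in> S2" unfolding \<mu>_def using f2 ne2 by simp
  have "\<mu> < Max S1"
  proof (rule ccontr)
    assume "\<not> \<mu> < Max S1"
    then have ge: "\<mu> \<ge> Max S1" by simp
    have muL: "\<mu> > real n + real s / 4" using ge M1 r1(1) by linarith
    have "\<mu> = -1 \<or> \<mu> = -2 \<or> Fc (real \<delta>) (real n) \<mu> = 0"
      using root_of_eig[OF assms(1) d2] muS unfolding S2_def by simp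
    then have F0: "Fc (real \<delta>) (real n) \<mu> = 0" using muL by auto
    have g: "gq (real \<delta>) (real s) (real n) \<mu> > 0"
      using gq_pos[OF dn(1) d8, of "real s" \<mu>] assms(4) s2 muL by auto
    have sd: "real s - real \<delta> > 0" using assms by simp
    have "Fc (real \<delta>) (real n) \<mu> - Fc (real s) (real n) \<mu> > 0"
      unfolding Fc_diff using g sd by simp
    then have "Fc (real s) (real n) \<mu> < 0" using F0 by simp
    then obtain r where r: "r > \<mu>" "Fc (real s) (real n) r = 0" using Fc_root_above by blast
    have "r \<in> S1" unfolding S1_def using eig_of_root[OF s2(1) assms(4) r(2)] r(1) muL by simp
    then have "r \<le> Max S1" using f1 by simp
    then show False using r(1) ge by simp
  qed
  then show ?thesis
    unfolding distance_spectral_radius_def GG_def[symmetric] \<mu>_def S1_def S2_def by simp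
qed

end
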